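(* Let $\delta,C>0$ with $C<\delta^2<\frac12$, and set $r(\delta)=\sqrt{(1-2\delta^2)/3}$ and $R(\delta)=\sqrt{\frac23(\delta^2-C)}$. Then for every $h>0$, $N\in\mathbb N$ and $f\in C_b^\infty(\mathbb R^N)$ with $\operatorname{supp}f\subset\Omega^0_N(R(\delta),r(\delta))$ we have $\mathcal E_{h,N}[f]\geq C\int_{\mathbb R^N}f^2e^{-V_N/(hN)}dx$.
   Context: Fix $\mu>1$. For $N\in\mathbb N$ let $V_N(x)=\sum_{k=1}^N\frac14(x_k^2-1)^2+\frac{\mu}{8\sin^2(\pi/N)}\sum_{k=1}^N(x_k-x_{k+1})^2$ on $\mathbb R^N$, with $x_{N+1}:=x_1$. $\overline x=\frac1N\sum_kx_k$. For $h>0$ and $f\in C_b^\infty(\mathbb R^N)$ (smooth, bounded with all derivatives), $\mathcal E_{h,N}[f]=hN\int|\nabla f|^2e^{-V_N/(hN)}dx$. For $R,r>0$, $\Omega^0_N(R,r)=\{x\in\mathbb R^N:\frac1N\sum_k(x_k-\overline x)^2\leq R^2,\ |\overline x|\leq r\}$. *)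

theory Defs
  imports "HOL-Analysis.Analysis"
begin

text \<open>Coordinates of R^N are indexed by a finite type 'n with CARD('n) = N.
  The cyclic order x_1, ..., x_N (with x_{N+1} = x_1) is the order of the
  list Enum.enum (class enum: a distinct list of all elements).\<close>

definition cyc_idx :: "'n::{finite,enum} \<Rightarrow> nat" where
  "cyc_idx i = (THE k. k < length (Enum.enum :: 'n list) \<and> (Enum.enum :: 'n list) ! k = i)"

definition cyc_succ :: "'n::{finite,enum} \<Rightarrow> 'n" where
  "cyc_succ i = (Enum.enum :: 'n list) ! ((cyc_idx i + 1) mod CARD('n))"

definition V :: "real \<Rightarrow> real^'n::{finite,enum} \<Rightarrow> real" where
  "V \<mu> x = (\<Sum>k\<in>UNIV. (1/4) * ((x$k)^2 - 1)^2)
      + \<mu> / (8 * (sin (pi / real CARD('n)))^2) * (\<Sum>k\<in>UNIV. (x$k - x$(cyc_succ k))^2)"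

definition mean :: "real^'n::finite \<Rightarrow> real" where
  "mean x = (\<Sum>k\<in>UNIV. x$k) / real CARD('n)"

definition Omega0 :: "real \<Rightarrow> real \<Rightarrow> (real^'n::finite) set" where
  "Omega0 R r = {x. (\<Sum>k\<in>UNIV. (x$k - mean x)^2) / real CARD('n) \<le> R^2 \<and> \<bar>mean x\<bar> \<le> r}"

definition pd :: "'n::finite \<Rightarrow> (real^'n \<Rightarrow> real) \<Rightarrow> real^'n \<Rightarrow> real" where
  "pd i f x = frechet_derivative f (at x) (axis i 1)"

fun Cb_k :: "nat \<Rightarrow> (real^'n::finite \<Rightarrow> real) \<Rightarrow> bool" where
  "Cb_k 0 f = (continuous_on UNIV f \<and> bounded (range f))"
| "Cb_k (Suc k) f = (continuous_on UNIV f \<and> bounded (range f) \<and> (\<forall>x. f differentiable (at x))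
      \<and> (\<forall>i. Cb_k k (pd i f)))"

definition Cb_inf :: "(real^'n::finite \<Rightarrow> real) \<Rightarrow> bool" where
  "Cb_inf f = (\<forall>k. Cb_k k f)"

definition grad_sq :: "(real^'n::finite \<Rightarrow> real) \<Rightarrow> real^'n \<Rightarrow> real" where
  "grad_sq f x = (\<Sum>i\<in>UNIV. (pd i f x)^2)"

definition energy :: "real \<Rightarrow> real \<Rightarrow> (real^'n::{finite,enum} \<Rightarrow> real) \<Rightarrow> real" where
  "energy \<mu> h f = h * real CARD('n) *
     (\<integral>x. grad_sq f x * exp (- V \<mu> x / (h * real CARD('n))) \<partial>lborel)"

end

theory Submission
  imports Defs
begin

definition uvec :: "real^'n::finite" where "uvec = (\<chi> i. 1)"
definition aa :: "real^'n::finite \<Rightarrow> real" where "aa x = (\<Sum>k\<in>UNIV. (x$k)^3 - x$k)"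
definition bb :: "real^'n::finite \<Rightarrow> real" where "bb x = (\<Sum>k\<in>UNIV. 3*(x$k)^2 - 1)"

lemma uvec_comp[simp]: "(x + s *\<^sub>R uvec)$k = x$k + s"
  by (simp add: uvec_def)

lemma V_line: "V \<mu> (x + s *\<^sub>R uvec) = (\<Sum>k\<in>UNIV. (1/4) * ((x$k + s)^2 - 1)^2)
   + \<mu> / (8 * (sin (pi / real CARD('n)))^2) * (\<Sum>k\<in>UNIV. (x$k - x$(cyc_succ k))^2)"
  for x :: "real^'n::{finite,enum}"
  by (simp add: V_def uvec_def)

lemma V_deriv: "((\<lambda>s. V \<mu> (x + s *\<^sub>R uvec)) has_real_derivative aa (x + s *\<^sub>R uvec)) (at s)"
  for x :: "real^'n::{finite,enum}"
proof -
  have "((\<lambda>s. (\<Sum>k\<in>UNIV. (1/4) * ((x$k + s)^2 - 1)^2)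
   + \<mu> / (8 * (sin (pi / real CARD('n)))^2) * (\<Sum>k\<in>UNIV. (x$k - x$(cyc_succ k))^2))
     has_real_derivative aa (x + s *\<^sub>R uvec)) (at s)"
    by (auto intro!: derivative_eq_intros sum.cong simp: aa_def uvec_def algebra_simps power2_eq_square power3_eq_cube)
  then show ?thesis by (simp add: V_line)
qed

lemma aa_deriv: "((\<lambda>s. aa (x + s *\<^sub>R uvec)) has_real_derivative bb (x + s *\<^sub>R uvec)) (at s)"
  for x :: "real^'n::finite"
  unfolding aa_def bb_def
  by (auto intro!: derivative_eq_intros sum.cong simp: uvec_def algebra_simps power2_eq_square power3_eq_cube)

lemma f_deriv:
  fixes f :: "real^'n::finite \<Rightarrow> real"
  assumes "f differentiable (at (x + s *\<^sub>R uvec))"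
  shows "((\<lambda>s. f (x + s *\<^sub>R uvec)) has_real_derivative
           frechet_derivative f (at (x + s *\<^sub>R uvec)) uvec) (at s)"
proof -
  let ?F = "frechet_derivative f (at (x + s *\<^sub>R uvec))"
  have d1: "((\<lambda>s. x + s *\<^sub>R uvec) has_derivative (\<lambda>t. t *\<^sub>R uvec)) (at s)"
    by (auto intro!: derivative_eq_intros)
  have d2: "(f has_derivative ?F) (at (x + s *\<^sub>R uvec))"
    using assms frechet_derivative_works by blast
  have lin: "linear ?F" using d2 has_derivative_linear by blast
  have "((f \<circ> (\<lambda>s. x + s *\<^sub>R uvec)) has_derivative (?F \<circ> (\<lambda>t. t *\<^sub>R uvec))) (at s)"
    by (rule diff_chain_at[OF d1 d2])
  moreover have "(?F \<circ> (\<lambda>t. t *\<^sub>R uvec)) = (*) (?F uvec)"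
    using lin by (auto simp: fun_eq_iff real_vector.linear_scale)
  ultimately show ?thesis by (simp add: has_field_derivative_def o_def)
qed

lemma var_decomp:
  fixes g :: "'a \<Rightarrow> real"
  assumes "finite A" "A \<noteq> {}"
  shows "(\<Sum>i\<in>A. (g i)^2) = (\<Sum>i\<in>A. (g i - sum g A / card A)^2) + (sum g A)^2 / card A"
proof -
  define m where "m = sum g A / card A"
  have c: "real (card A) > 0" using assms by auto
  have "(\<Sum>i\<in>A. (g i - m)^2) = (\<Sum>i\<in>A. (g i)^2) - 2 * m * sum g A + card A * m^2"
    by (simp add: power2_diff sum_subtractf sum.distrib sum_distrib_left algebra_simps)
       (simp add: sum_distrib_left[symmetric] mult.assoc[symmetric] sum_distrib_right[symmetric])
  also have "\<dots> = (\<Sum>i\<in>A. (g i)^2) - (sum g A)^2 / card A"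
    using c by (simp add: m_def field_simps power2_eq_square)
  finally show ?thesis unfolding m_def by simp
qed

lemma sum_sq_le:
  fixes g :: "'a \<Rightarrow> real"
  assumes "finite A"
  shows "(sum g A)^2 \<le> card A * (\<Sum>i\<in>A. (g i)^2)"
proof (cases "A = {}")
  case False
  have c: "real (card A) > 0" using assms False by auto
  have "(sum g A)^2 / card A \<le> (\<Sum>i\<in>A. (g i)^2)"
    using var_decomp[OF assms False, of g] by (simp add: sum_nonneg)
  then show ?thesis using c by (simp add: field_simps)
qed simp

lemma integrable_cont_compact:
  fixes g :: "'a::euclidean_space \<Rightarrow> real"
  assumes K: "compact K" and cg: "continuous_on UNIV g" and g0: "\<And>x. x \<notin> K \<Longrightarrow> g x = 0"
  shows "integrable lborel g"
proof -
  have "integrable lborel (\<lambda>x. indicator K x *\<^sub>R g x)"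
    using borel_integrable_compact[OF K continuous_on_subset[OF cg]] by auto
  also have "(\<lambda>x. indicator K x *\<^sub>R g x) = g"
    using g0 by (auto simp: indicator_def fun_eq_iff)
  finally show ?thesis .
qed

lemma frechet_zero_outside:
  fixes f :: "'a::real_normed_vector \<Rightarrow> real"
  assumes "f differentiable (at x)" "x \<notin> closure {x. f x \<noteq> 0}"
  shows "frechet_derivative f (at x) = (\<lambda>_. 0)"
proof -
  let ?S = "- closure {x. f x \<noteq> 0}"
  have d: "(f has_derivative frechet_derivative f (at x)) (at x)"
    using assms frechet_derivative_works by blast
  have "((\<lambda>_. 0::real) has_derivative frechet_derivative f (at x)) (at x)"
    by (rule has_derivative_transform_within_open[OF d, of ?S]) (use assms in \<open>auto\<close>, meson closure_subset mem_Collect_eq subsetD)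
  moreover have "((\<lambda>_. 0::real) has_derivative (\<lambda>_. 0)) (at x)" by simp
  ultimately show ?thesis using has_derivative_unique by blast
qed

lemma line_deriv_integral_zero:
  fixes G DG :: "'a::euclidean_space \<Rightarrow> real" and u :: 'a
  assumes K: "compact K" and cG: "continuous_on UNIV G" and cD: "continuous_on UNIV DG"
    and G0: "\<And>x. x \<notin> K \<Longrightarrow> G x = 0" and D0: "\<And>x. x \<notin> K \<Longrightarrow> DG x = 0"
    and der: "\<And>x s. ((\<lambda>s. G (x + s *\<^sub>R u)) has_real_derivative DG (x + s *\<^sub>R u)) (at s)"
  shows "integral\<^sup>L lborel DG = 0"
proof -
  obtain \<rho> where rho0: "\<forall>x\<in>K. norm x \<le> \<rho>"
    using compact_imp_bounded[OF K] unfolding bounded_iff by blast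
  have rho: "K \<subseteq> cball 0 \<rho>" using rho0 by (auto simp: subset_iff)
  have "compact (DG ` K)"
    by (rule compact_continuous_image[OF continuous_on_subset[OF cD subset_UNIV] K])
  then obtain M0 where M0': "\<forall>y\<in>DG ` K. norm y \<le> M0"
    using compact_imp_bounded[of "DG ` K"] unfolding bounded_iff by blast
  have M0: "\<And>y. y \<in> DG ` K \<Longrightarrow> norm y \<le> M0" using M0' by blast
  define M where "M = max M0 0"
  have M: "\<bar>DG x\<bar> \<le> M" for x
    using M0[of "DG x"] D0[of x] unfolding M_def by (cases "x \<in> K") auto
  have M_nonneg: "M \<ge> 0" unfolding M_def by simp
  define K' where "K' = cball (0::'a) (\<rho> + norm u)"
  define t where "t n = 1 / real (Suc n)" for n
  define S where "S n x = (G (x + t n *\<^sub>R u) - G x) / t n" for n x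
  have tpos: "t n > 0" "t n \<le> 1" for n unfolding t_def by auto
  have measG[measurable]: "G \<in> borel_measurable borel" using cG by (rule borel_measurable_continuous_onI)
  have measD[measurable]: "DG \<in> borel_measurable borel" using cD by (rule borel_measurable_continuous_onI)
  have intG: "integrable lborel G"
  proof -
    have "integrable lborel (\<lambda>x. indicator K x *\<^sub>R G x)"
      by (rule borel_integrable_compact[OF K continuous_on_subset[OF cG subset_UNIV]])
    also have "(\<lambda>x. indicator K x *\<^sub>R G x) = G"
      using G0 by (auto simp: indicator_def fun_eq_iff)
    finally show ?thesis .
  qed
  have transl: "integrable lborel (\<lambda>x. G (c + x)) \<and> integral\<^sup>L lborel (\<lambda>x. G (c + x)) = integral\<^sup>L lborel G" for c :: 'a
  proof -
    have m: "(+) c \<in> measurable lborel borel"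
      by (simp add: measurable_lborel1 borel_measurable_continuous_onI continuous_intros)
    have d: "distr lborel borel ((+) c) = lborel" by (rule lborel_distr_plus)
    have i1: "integral\<^sup>L (distr lborel borel ((+) c)) G = integral\<^sup>L lborel (\<lambda>x. G (c + x))"
      by (rule integral_distr[OF m measG])
    have i2: "integrable (distr lborel borel ((+) c)) G \<longleftrightarrow> integrable lborel (\<lambda>x. G (c + x))"
      by (rule integrable_distr_eq[OF m measG])
    have i1': "integral\<^sup>L lborel G = integral\<^sup>L lborel (\<lambda>x. G (c + x))" using i1 by (simp only: d)
    have i2': "integrable lborel G \<longleftrightarrow> integrable lborel (\<lambda>x. G (c + x))" using i2 by (simp only: d)
    show ?thesis using i1' i2' intG by simp
  qed
  have intS: "integral\<^sup>L lborel (S n) = 0" for n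
  proof -
    have e: "S n = (\<lambda>x. (G (t n *\<^sub>R u + x) - G x) / t n)"
      by (rule ext) (simp only: S_def add.commute)
    have "integral\<^sup>L lborel (\<lambda>x. (G (t n *\<^sub>R u + x) - G x) / t n)
        = (integral\<^sup>L lborel (\<lambda>x. G (t n *\<^sub>R u + x)) - integral\<^sup>L lborel G) / t n"
      unfolding integral_divide_zero Bochner_Integration.integral_diff[OF conjunct1[OF transl[of "t n *\<^sub>R u"]] intG] ..
    then show ?thesis unfolding e using transl[of "t n *\<^sub>R u"] by simp
  qed
  have lim: "(\<lambda>n. S n x) \<longlonglongrightarrow> DG x" for x
  proof -
    have "((\<lambda>h. (G (x + h *\<^sub>R u) - G x) / h) \<longlongrightarrow> DG x) (at 0)"
      using der[of x 0] unfolding DERIV_def by simp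
    moreover have "filterlim t (at 0) sequentially"
    proof (rule tendsto_imp_filterlim_at_right[THEN filterlim_mono])
      show "t \<longlonglongrightarrow> 0" unfolding t_def using LIMSEQ_inverse_real_of_nat by (simp add: inverse_eq_divide)
      show "\<forall>\<^sub>F n in sequentially. 0 < t n" using tpos by simp
    qed (simp_all add: at_le)
    ultimately show ?thesis unfolding S_def by (rule filterlim_compose)
  qed
  have bound: "norm (S n x) \<le> M * indicator K' x" for n x
  proof (cases "x \<in> K'")
    case True
    have "\<exists>z. 0 < z \<and> z < t n \<and> G (x + t n *\<^sub>R u) - G (x + 0 *\<^sub>R u) = (t n - 0) * DG (x + z *\<^sub>R u)"
      by (rule MVT2[OF tpos(1)]) (rule der)
    then obtain z where "G (x + t n *\<^sub>R u) - G x = t n * DG (x + z *\<^sub>R u)" by auto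
    then have "S n x = DG (x + z *\<^sub>R u)" unfolding S_def using tpos[of n] by simp
    then show ?thesis using M True by simp
  next
    case False
    then have "norm x > \<rho> + norm u" unfolding K'_def by simp
    moreover have "norm (x + t n *\<^sub>R u) \<ge> norm x - t n * norm u"
      using norm_triangle_ineq2[of x "- (t n *\<^sub>R u)"] tpos[of n] by simp
    moreover have "t n * norm u \<le> norm u" using tpos[of n] by (simp add: mult_left_le_one_le)
    ultimately have "norm (x + t n *\<^sub>R u) > \<rho>" "norm x > \<rho>" using norm_ge_zero[of u] by linarith+
    then have "x + t n *\<^sub>R u \<notin> K" "x \<notin> K" using rho by auto
    then show ?thesis using G0 False unfolding S_def by simp
  qed
  have "(\<lambda>n. integral\<^sup>L lborel (S n)) \<longlonglongrightarrow> integral\<^sup>L lborel DG"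
  proof (rule integral_dominated_convergence[where w="\<lambda>x. M * indicator K' x"])
    show "DG \<in> borel_measurable lborel" by simp
    show "S n \<in> borel_measurable lborel" for n unfolding S_def by measurable
    show "integrable lborel (\<lambda>x. M * indicator K' x)"
      unfolding K'_def by (intro integrable_mult_right integrable_real_indicator emeasure_bounded_finite) auto
    show "AE x in lborel. (\<lambda>n. S n x) \<longlonglongrightarrow> DG x" using lim by simp
    show "AE x in lborel. norm (S n x) \<le> M * indicator K' x" for n using bound by simp
  qed
  then show ?thesis using intS by (simp add: LIMSEQ_const_iff)
qed


theorem proposition5p11:
  fixes \<mu> \<delta> C h :: real and f :: "real^'n::{finite,enum} \<Rightarrow> real"
  assumes "\<mu> > 1" and "\<delta> > 0" and "C > 0" and "C < \<delta>^2" and "\<delta>^2 < 1/2"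
    and "h > 0"
    and "Cb_inf f"
    and "closure {x. f x \<noteq> 0} \<subseteq>
           Omega0 (sqrt (2/3 * (\<delta>^2 - C))) (sqrt ((1 - 2 * \<delta>^2) / 3))"
  shows "energy \<mu> h f \<ge> C * (\<integral>x. (f x)^2 * exp (- V \<mu> x / (h * real CARD('n))) \<partial>lborel)"
proof -
  note hC = assms(3) and hCd = assms(4) and hd = assms(5) and hh = assms(6)
  define N where "N = real CARD('n)"
  have Npos: "N > 0" unfolding N_def by simp
  define c where "c = h * N"
  have cpos: "c > 0" unfolding c_def using hh Npos by simp
  define w where "w x = exp (- V \<mu> x / c)" for x :: "real^'n::{finite,enum}"
  define Df where "Df x = frechet_derivative f (at x) uvec" for x :: "real^'n::{finite,enum}"
  define K where "K = closure {x. f x \<noteq> 0}"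
  have wpos: "w x > 0" for x unfolding w_def by simp
  have cb2: "Cb_k 2 f" using assms(7) unfolding Cb_inf_def by blast
  then have diff: "\<And>x. f differentiable (at x)" and cf: "continuous_on UNIV f"
     and cpd: "\<And>i. continuous_on UNIV (pd i f)"
    by (simp_all add: numeral_2_eq_2)
  have uvec_sum: "uvec = (\<Sum>i\<in>UNIV. axis i (1::real))"
    by (simp add: vec_eq_iff uvec_def axis_def)
  have Df_sum: "Df x = (\<Sum>i\<in>UNIV. pd i f x)" for x
  proof -
    have "linear (frechet_derivative f (at x))"
      using diff[of x] frechet_derivative_works has_derivative_linear by blast
    then show ?thesis unfolding Df_def pd_def uvec_sum by (simp add: real_vector.linear_sum)
  qed
  have cDf: "continuous_on UNIV Df"
    unfolding Df_sum[abs_def] by (intro continuous_intros cpd)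
  have cV: "continuous_on UNIV (V \<mu>)"
    unfolding V_def[abs_def] by (intro continuous_intros)
  have cw: "continuous_on UNIV w"
    unfolding w_def[abs_def] using cpos by (auto intro!: continuous_intros cV)
  have caa: "continuous_on UNIV aa" unfolding aa_def[abs_def] by (intro continuous_intros)
  have cbb: "continuous_on UNIV bb" unfolding bb_def[abs_def] by (intro continuous_intros)
  have outK: "x \<notin> K \<Longrightarrow> f x = 0" for x
    unfolding K_def by (meson closure_subset mem_Collect_eq subsetD)
  have sq_bound: "(\<Sum>k\<in>UNIV. (x$k)^2) \<le> N * (1 - 2*C) / 3" if "x \<in> K" for x
  proof -
    have "x \<in> Omega0 (sqrt (2/3 * (\<delta>^2 - C))) (sqrt ((1 - 2 * \<delta>^2) / 3))"
      using that assms(8) K_def by blast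
    then have v: "(\<Sum>k\<in>UNIV. (x$k - mean x)^2) / N \<le> 2/3 * (\<delta>^2 - C)"
      and m: "\<bar>mean x\<bar> \<le> sqrt ((1 - 2 * \<delta>^2) / 3)"
      using hCd hd by (auto simp: Omega0_def N_def)
    have m2: "(mean x)^2 \<le> (1 - 2 * \<delta>^2) / 3"
    proof -
      have "\<bar>mean x\<bar>^2 \<le> (sqrt ((1 - 2 * \<delta>^2) / 3))^2"
        using m by (intro power_mono) auto
      then show ?thesis using hd by simp
    qed
    have dec: "(\<Sum>k\<in>UNIV. (x$k)^2) = (\<Sum>k\<in>UNIV. (x$k - mean x)^2) + N * (mean x)^2"
      using var_decomp[of "UNIV::'n set" "\<lambda>k. x$k"] Npos
      by (simp add: mean_def N_def power2_eq_square)
    have "(\<Sum>k\<in>UNIV. (x$k - mean x)^2) \<le> N * (2/3 * (\<delta>^2 - C))"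
      using v Npos by (simp add: divide_le_eq mult.commute)
    moreover have "N * (mean x)^2 \<le> N * ((1 - 2 * \<delta>^2) / 3)"
      using m2 Npos by simp
    ultimately show ?thesis unfolding dec by (simp add: algebra_simps)
  qed
  have Kcomp: "compact K"
  proof -
    have "K \<subseteq> cball 0 (sqrt N)"
    proof
      fix x assume "x \<in> K"
      then have "(\<Sum>k\<in>UNIV. (x$k)^2) \<le> N" using sq_bound[of x] hC Npos by (smt (verit) divide_le_eq mult_le_cancel_left1)
      then have "sqrt (\<Sum>k\<in>UNIV. (x$k)^2) \<le> sqrt N" by simp
      then show "x \<in> cball 0 (sqrt N)" by (simp add: norm_vec_def L2_set_def)
    qed
    then show ?thesis unfolding K_def by (metis bounded_cball bounded_subset compact_eq_bounded_closed closed_closure)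
  qed
  define G where "G x = (f x)^2 * aa x * w x" for x :: "real^'n::{finite,enum}"
  define DG where "DG x = 2 * f x * Df x * aa x * w x + (f x)^2 * bb x * w x - (f x)^2 * (aa x)^2 * w x / c" for x :: "real^'n::{finite,enum}"
  have der: "((\<lambda>s. G (x + s *\<^sub>R uvec)) has_real_derivative DG (x + s *\<^sub>R uvec)) (at s)" for x s
  proof -
    let ?y = "x + s *\<^sub>R uvec"
    have df: "((\<lambda>s. f (x + s *\<^sub>R uvec)) has_real_derivative Df ?y) (at s)"
      unfolding Df_def by (rule f_deriv[OF diff])
    have dw: "((\<lambda>s. w (x + s *\<^sub>R uvec)) has_real_derivative w ?y * (- aa ?y / c)) (at s)"
      unfolding w_def using V_deriv[of \<mu> x s] cpos
      by (auto intro!: derivative_eq_intros)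
    show ?thesis unfolding G_def
      by (rule derivative_eq_intros df aa_deriv dw refl | simp add: DG_def field_simps power2_eq_square)+
  qed
  have intDG0: "integral\<^sup>L lborel DG = 0"
  proof (rule line_deriv_integral_zero[OF Kcomp _ _ _ _ der])
    show "continuous_on UNIV G" unfolding G_def[abs_def] by (intro continuous_intros cf caa cw)
    show "continuous_on UNIV DG" unfolding DG_def[abs_def] using cpos by (auto intro!: continuous_intros cf caa cw cbb cDf)
    show "G x = 0" if "x \<notin> K" for x using outK[OF that] by (simp add: G_def)
    show "DG x = 0" if "x \<notin> K" for x using outK[OF that] by (simp add: DG_def)
  qed
  have intDG: "integrable lborel DG"
    using cpos by (intro integrable_cont_compact[OF Kcomp]) (auto simp: DG_def outK intro!: continuous_intros cf caa cw cbb cDf)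
  have intfw: "integrable lborel (\<lambda>x. (f x)^2 * w x)"
    by (rule integrable_cont_compact[OF Kcomp]) (auto simp: outK intro!: continuous_intros cf cw)
  have gs0: "grad_sq f x = 0" if "x \<notin> K" for x
    using frechet_zero_outside[OF diff that[unfolded K_def]] by (simp add: grad_sq_def pd_def)
  have cgs: "continuous_on UNIV (grad_sq f)"
    unfolding grad_sq_def[abs_def] by (intro continuous_intros cpd)
  have intgw: "integrable lborel (\<lambda>x. grad_sq f x * w x)"
    by (rule integrable_cont_compact[OF Kcomp]) (auto simp: gs0 intro!: continuous_intros cgs cw)
  have pw: "DG x + N * C * ((f x)^2 * w x) \<le> N * (c * (grad_sq f x * w x))" for x
  proof (cases "f x = 0")
    case True
    have "grad_sq f x \<ge> 0" unfolding grad_sq_def by (simp add: sum_nonneg)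
    then show ?thesis using True Npos cpos wpos[of x] by (simp add: DG_def)
  next
    case False
    then have xK: "x \<in> K" using outK by blast
    have bb_eq: "bb x = 3 * (\<Sum>k\<in>UNIV. (x$k)^2) - N"
      by (simp add: bb_def sum_subtractf sum_distrib_left N_def)
    have "3 * (\<Sum>k\<in>UNIV. (x$k)^2) \<le> N * (1 - 2*C)" using sq_bound[OF xK] by simp
    then have "bb x \<le> - 2 * (N * C)" unfolding bb_eq by (simp add: algebra_simps)
    then have bbl: "bb x + N * C \<le> 0" using mult_pos_pos[OF Npos hC] by linarith
    have CS: "(Df x)^2 \<le> N * grad_sq f x"
      using sum_sq_le[of "UNIV::'n set" "\<lambda>i. pd i f x"] by (simp add: Df_sum grad_sq_def N_def)
    have key: "c * (Df x)^2 * w x + (f x)^2 * bb x * w x - DG x = w x * (c * Df x - f x * aa x)^2 / c"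
      using cpos by (simp add: DG_def field_simps power2_eq_square)
    have "w x * (c * Df x - f x * aa x)^2 / c \<ge> 0" using wpos[of x] cpos by simp
    then have "DG x \<le> c * (Df x)^2 * w x + (f x)^2 * bb x * w x" using key by linarith
    moreover have "(f x)^2 * w x * (bb x + N * C) \<le> 0"
      using bbl wpos[of x] by (simp add: mult_nonneg_nonpos)
    moreover have "c * (Df x)^2 * w x \<le> c * (N * grad_sq f x) * w x"
      using CS cpos wpos[of x] by simp
    ultimately show ?thesis by (simp add: algebra_simps)
  qed
  have "integral\<^sup>L lborel (\<lambda>x. DG x + N * C * ((f x)^2 * w x)) \<le> integral\<^sup>L lborel (\<lambda>x. N * (c * (grad_sq f x * w x)))"
    by (rule integral_mono) (use intDG intfw intgw pw in auto)
  then have "N * C * integral\<^sup>L lborel (\<lambda>x. (f x)^2 * w x) \<le> N * (c * integral\<^sup>L lborel (\<lambda>x. grad_sq f x * w x))"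
    using intDG intfw intgw intDG0 by simp
  then have "C * integral\<^sup>L lborel (\<lambda>x. (f x)^2 * w x) \<le> c * integral\<^sup>L lborel (\<lambda>x. grad_sq f x * w x)"
    using Npos by (simp add: mult.assoc)
  then show ?thesis unfolding energy_def w_def c_def N_def by simp
qed

end
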